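(* For a polynomial $f(z)$ with complex coefficients define the rational function $$\mathcal{L}_z(f)=f\frac{d^2f}{dz^2}-\left(\frac{df}{dz}\right)^2+\frac{f}{z}\frac{df}{dz}.$$ Let $f(z)$ and $g(z)$ be arbitrary polynomials. Then: (a) $\mathcal{L}_z(kf)=k^2\,\mathcal{L}_z(f)$ for every constant $k$; (b) $\mathcal{L}_z(fg)=f^2\,\mathcal{L}_z(g)+g^2\,\mathcal{L}_z(f)$; (c) if $h=-z\,\mathcal{L}_z(f)+k(z+\mu)f^2$, where $k$ and $\mu$ are constants, then $f$ divides $z\,\mathcal{L}_z(h)-2k(z+\mu)h^2$ (in the polynomial ring $\mathbb{C}[z]$).
   Context: Here $\mathcal{L}_z$ is the Hirota-like operator defined in the claim; note that $h$ and $z\,\mathcal{L}_z(h)$ are polynomials when $f$ is a polynomial. *)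

theory Defs
  imports "HOL-Computational_Algebra.Polynomial" "HOL-Computational_Algebra.Fraction_Field"
begin

definition rat_of_poly :: "complex poly \<Rightarrow> complex poly fract" where
  "rat_of_poly p = Fract p 1"

definition Lz :: "complex poly \<Rightarrow> complex poly fract" where
  "Lz f = rat_of_poly (f * pderiv (pderiv f)) - rat_of_poly (pderiv f) ^ 2
          + (rat_of_poly f / rat_of_poly [:0, 1:]) * rat_of_poly (pderiv f)"

end

theory Submission
  imports Defs
begin

lemma ring_core:
  fixes f a b c w t k d A A1 B B1 B2 h h1 h2 :: "'a::comm_ring_1"
  assumes "h = f*A + B" "h1 = a*A + f*A1 + B1" "h2 = b*A + 2*a*A1 + f*d + B2"
    "A = -(w*b) - a + t*f" "A1 = -(w*c) - 2*b + k*f + t*a" "B = w*a^2"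
    "B1 = a^2 + 2*w*a*b" "B2 = 4*a*b+2*w*b^2+2*w*a*c"
  shows "w*(h*h2 - h1^2) + h*h1 - 2*t*h^2 = f*(0 - b^3*w^3 + 2*a*b*c*w^3 + 3*a*b^2*w^2 + a^2*w^2*d - a^2*c*w^2 - 2*a^2*b*w - a^2*b*w^2*t + 4*a^3*w*t + 2*a^3*w^2*k - f*c^2*w^3 - f*b*w^2*d - 3*f*b*c*w^2 - 2*f*b^2*w - 2*f*b^2*w^2*t - f*a*w*d + f*a*c*w + 4*f*a*c*w^2*t + 2*f*a*b + f*a*b*w*t - 4*f*a*b*w^2*k - 4*f*a^2*t - f*a^2*w*k - 6*f*a^2*w*t^2 + f^2*w*t*d - f^2*c*w*t + 2*f^2*c*w^2*k - 2*f^2*b*t + 3*f^2*b*w*k + 5*f^2*b*w*t^2 - f^2*a*k + 6*f^2*a*t^2 - 2*f^2*a*w*t*k + f^3*t*k - 2*f^3*t^3 - f^3*w*k^2)"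
  unfolding assms by (simp add: algebra_simps power2_eq_square power3_eq_cube eval_nat_numeral)

lemma rp_add: "rat_of_poly (p + q) = rat_of_poly p + rat_of_poly q"
  by (simp add: rat_of_poly_def)
lemma rp_diff: "rat_of_poly (p - q) = rat_of_poly p - rat_of_poly q"
  by (simp add: rat_of_poly_def)
lemma rp_minus: "rat_of_poly (- p) = - rat_of_poly p"
  by (simp add: rat_of_poly_def)
lemma rp_mult: "rat_of_poly (p * q) = rat_of_poly p * rat_of_poly q"
  by (simp add: rat_of_poly_def)
lemma rp_pow: "rat_of_poly (p ^ n) = rat_of_poly p ^ n"
  by (induction n) (simp_all add: rp_mult, simp add: rat_of_poly_def One_fract_def)
lemma rp_2: "rat_of_poly 2 = 2"
  by (metis Fract_of_nat_eq of_nat_numeral rat_of_poly_def)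
lemma rp_inj: "rat_of_poly p = rat_of_poly q \<longleftrightarrow> p = q"
  by (simp add: rat_of_poly_def eq_fract)
lemma rp_X: "rat_of_poly [:0,1:] \<noteq> 0"
  by (simp add: rat_of_poly_def Zero_fract_def eq_fract)

lemmas rp = rp_add rp_diff rp_minus rp_mult rp_pow rp_2

definition P :: "complex poly \<Rightarrow> complex poly" where
  "P f = [:0,1:] * (f * pderiv (pderiv f) - pderiv f ^ 2) + f * pderiv f"

lemma Lz_P: "Lz f = rat_of_poly (P f) / rat_of_poly [:0,1:]"
  using rp_X unfolding Lz_def P_def rp by (simp add: field_simps)

theorem lemma3p1:
  fixes f g :: "complex poly"
  shows "(\<forall>k :: complex. Lz (smult k f) = rat_of_poly [:k:] ^ 2 * Lz f)
    \<and> Lz (f * g) = rat_of_poly f ^ 2 * Lz g + rat_of_poly g ^ 2 * Lz f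
    \<and> (\<forall>(h :: complex poly) (k :: complex) (\<mu> :: complex).
         rat_of_poly h = - (rat_of_poly [:0, 1:] * Lz f)
                         + rat_of_poly [:k:] * rat_of_poly [:\<mu>, 1:] * rat_of_poly f ^ 2
         \<longrightarrow> (\<exists>q :: complex poly.
               rat_of_poly q = rat_of_poly [:0, 1:] * Lz h
                               - 2 * rat_of_poly [:k:] * rat_of_poly [:\<mu>, 1:] * rat_of_poly h ^ 2
             \<and> f dvd q))"
proof (intro conjI allI impI)
  fix k :: complex
  have "P (smult k f) = [:k:]^2 * P f"
  proof -
    have e: "smult k f = [:k:]*f" by simp
    show ?thesis by (simp add: P_def pderiv_smult pderiv_mult pderiv_pCons algebra_simps power2_eq_square)
  qed
  then show "Lz (smult k f) = rat_of_poly [:k:] ^ 2 * Lz f"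
    by (simp add: Lz_P rp)
next
  have "P (f*g) = f^2 * P g + g^2 * P f"
    by (simp add: P_def pderiv_mult pderiv_add algebra_simps power2_eq_square)
  then show "Lz (f * g) = rat_of_poly f ^ 2 * Lz g + rat_of_poly g ^ 2 * Lz f"
    by (simp add: Lz_P rp add_divide_distrib)
next
  fix h :: "complex poly" and k \<mu> :: complex
  assume hyp: "rat_of_poly h = - (rat_of_poly [:0, 1:] * Lz f)
                         + rat_of_poly [:k:] * rat_of_poly [:\<mu>, 1:] * rat_of_poly f ^ 2"
  define t where "t = [:k:] * [:\<mu>, 1:]"
  define w :: "complex poly" where "w = [:0,1:]"
  have "rat_of_poly h = rat_of_poly (- P f + t * f^2)"
    unfolding rp t_def using hyp rp_X by (simp add: Lz_P)
  hence hP: "h = - P f + t * f^2" by (simp add: rp_inj)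
  define a where "a = pderiv f"
  define b where "b = pderiv a"
  define c where "c = pderiv b"
  define A where "A = -(w*b) - a + t*f"
  define A1 where "A1 = -(w*c) - 2*b + [:k:]*f + t*a"
  define B where "B = w*a^2"
  define B1 where "B1 = a^2 + 2*w*a*b"
  define B2 where "B2 = 4*a*b+2*w*b^2+2*w*a*c"
  have pw: "pderiv w = 1" by (simp add: w_def pderiv_pCons)
  have pt: "pderiv t = [:k:]" by (simp add: t_def pderiv_pCons)
  have h0: "h = f*A + B"
    unfolding hP P_def A_def B_def a_def b_def w_def by (simp add: algebra_simps power2_eq_square)
  have pA: "pderiv A = A1"
    unfolding A_def A1_def by (simp add: pderiv_mult pderiv_add pderiv_diff pderiv_minus pw pt c_def b_def[symmetric] a_def[symmetric] algebra_simps)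
  have pB: "pderiv B = B1"
    unfolding B_def B1_def by (simp add: pderiv_mult pderiv_add pw b_def power2_eq_square algebra_simps)
  have pB1: "pderiv B1 = B2"
    unfolding B1_def B2_def by (simp add: pderiv_mult pderiv_add pw b_def c_def power2_eq_square algebra_simps)
  have h1: "pderiv h = a*A + f*A1 + B1"
    unfolding h0 by (simp add: pderiv_mult pderiv_add pA pB a_def)
  have h2: "pderiv (pderiv h) = b*A + 2*a*A1 + f*pderiv A1 + B2"
    unfolding h1 by (simp add: pderiv_mult pderiv_add pA pB1 b_def a_def[symmetric] algebra_simps)
  define q where "q = P h - 2*t*h^2"
  have "\<exists>R. q = f * R"
    unfolding q_def P_def w_def[symmetric]
    using ring_core[OF h0 h1 h2 A_def A1_def B_def B1_def B2_def] by blast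
  then have "f dvd q" by (auto simp: dvd_def)
  moreover have "rat_of_poly q = rat_of_poly [:0, 1:] * Lz h
                               - 2 * rat_of_poly [:k:] * rat_of_poly [:\<mu>, 1:] * rat_of_poly h ^ 2"
    unfolding q_def rp t_def using rp_X by (simp add: Lz_P)
  ultimately show "\<exists>q. rat_of_poly q = rat_of_poly [:0, 1:] * Lz h
                               - 2 * rat_of_poly [:k:] * rat_of_poly [:\<mu>, 1:] * rat_of_poly h ^ 2
             \<and> f dvd q" by blast
qed

end
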